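(* Let $\Gamma=A\ast B$ with $A,B$ non-trivial, let $\varepsilon>0$ and let $(G,d)$ be a group with a bi-invariant metric without $\varepsilon$-small subgroups. Let $\mu_A:A\to G$, $\mu_B:B\to G$ be bounded alternating maps with $\delta:=\max\{\|\mu_A\|_\infty,\|\mu_B\|_\infty\}\leq\varepsilon/2$. Then the split quasi-representation $\mu=\mu_A\ast\mu_B:\Gamma\to G$ satisfies $D(\mu)\geq\delta$.
   Context: $G$ has no $\varepsilon$-small subgroups if the open $\varepsilon$-ball around the identity $e$ contains no non-trivial subgroup. For maps $f_1,f_2:X\to G$, $d(f_1,f_2)=\sup_x d(f_1(x),f_2(x))$, and $\|f\|_\infty=d(f,e)$ (distance to the constant map $e$); $f$ is bounded if this is finite. Alternating means $\mu(x^{-1})=\mu(x)^{-1}$. Each $1\neq g\in A\ast B$ has a unique normal form $g=a_1b_1\cdots a_nb_n$ ($a_i\in A$, $b_i\in B$, all non-trivial except possibly $a_1$ or $b_n$), and $(\mu_A\ast\mu_B)(1)=e$, $(\mu_A\ast\mu_B)(a_1b_1\cdots a_nb_n)=\mu_A(a_1)\mu_B(b_1)\cdots\mu_A(a_n)\mu_B(b_n)$. $D(\mu)=\inf\{d(\mu,\rho):\rho\in\mathrm{Hom}(\Gamma,G)\}$. *)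

theory Defs
  imports "HOL-Algebra.Group" "HOL-Library.Extended_Real"
begin

definition nontriv_letter :: "'a monoid \<Rightarrow> 'b monoid \<Rightarrow> ('a + 'b) \<Rightarrow> bool" where
  "nontriv_letter A B x = (case x of
      Inl a \<Rightarrow> a \<in> carrier A \<and> a \<noteq> \<one>\<^bsub>A\<^esub>
    | Inr b \<Rightarrow> b \<in> carrier B \<and> b \<noteq> \<one>\<^bsub>B\<^esub>)"

fun same_side :: "('a + 'b) \<Rightarrow> ('a + 'b) \<Rightarrow> bool" where
  "same_side (Inl _) (Inl _) = True"
| "same_side (Inr _) (Inr _) = True"
| "same_side _ _ = False"

fun alternating_word :: "('a + 'b) list \<Rightarrow> bool" where
  "alternating_word (x # y # w) = (\<not> same_side x y \<and> alternating_word (y # w))"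
| "alternating_word _ = True"

definition reduced_word :: "'a monoid \<Rightarrow> 'b monoid \<Rightarrow> ('a + 'b) list \<Rightarrow> bool" where
  "reduced_word A B w = ((\<forall>x\<in>set w. nontriv_letter A B x) \<and> alternating_word w)"

fun cons_red :: "'a monoid \<Rightarrow> 'b monoid \<Rightarrow> ('a + 'b) \<Rightarrow> ('a + 'b) list \<Rightarrow> ('a + 'b) list" where
  "cons_red A B (Inl a) w =
     (if a = \<one>\<^bsub>A\<^esub> then w else
      (case w of
         Inl a' # w' \<Rightarrow> (if a \<otimes>\<^bsub>A\<^esub> a' = \<one>\<^bsub>A\<^esub> then w' else Inl (a \<otimes>\<^bsub>A\<^esub> a') # w')
       | _ \<Rightarrow> Inl a # w))"
| "cons_red A B (Inr b) w =
     (if b = \<one>\<^bsub>B\<^esub> then w else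
      (case w of
         Inr b' # w' \<Rightarrow> (if b \<otimes>\<^bsub>B\<^esub> b' = \<one>\<^bsub>B\<^esub> then w' else Inr (b \<otimes>\<^bsub>B\<^esub> b') # w')
       | _ \<Rightarrow> Inr b # w))"

definition free_product :: "'a monoid \<Rightarrow> 'b monoid \<Rightarrow> ('a + 'b) list monoid" where
  "free_product A B = \<lparr> carrier = {w. reduced_word A B w},
                        mult = (\<lambda>u v. foldr (cons_red A B) u v),
                        one = [] \<rparr>"

definition split_map ::
  "('g, 'c) monoid_scheme \<Rightarrow> ('a \<Rightarrow> 'g) \<Rightarrow> ('b \<Rightarrow> 'g) \<Rightarrow> ('a + 'b) list \<Rightarrow> 'g" where
  "split_map G muA muB w =
     foldr (\<lambda>x g. (case x of Inl a \<Rightarrow> muA a | Inr b \<Rightarrow> muB b) \<otimes>\<^bsub>G\<^esub> g) w \<one>\<^bsub>G\<^esub>"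

definition metric_on :: "'g set \<Rightarrow> ('g \<Rightarrow> 'g \<Rightarrow> real) \<Rightarrow> bool" where
  "metric_on S d = ((\<forall>x\<in>S. \<forall>y\<in>S. 0 \<le> d x y \<and> (d x y = 0 \<longleftrightarrow> x = y) \<and> d x y = d y x)
     \<and> (\<forall>x\<in>S. \<forall>y\<in>S. \<forall>z\<in>S. d x z \<le> d x y + d y z))"

definition bi_invariant_metric :: "('g, 'c) monoid_scheme \<Rightarrow> ('g \<Rightarrow> 'g \<Rightarrow> real) \<Rightarrow> bool" where
  "bi_invariant_metric G d = (metric_on (carrier G) d \<and>
     (\<forall>g\<in>carrier G. \<forall>x\<in>carrier G. \<forall>y\<in>carrier G.
        d (g \<otimes>\<^bsub>G\<^esub> x) (g \<otimes>\<^bsub>G\<^esub> y) = d x y \<and> d (x \<otimes>\<^bsub>G\<^esub> g) (y \<otimes>\<^bsub>G\<^esub> g) = d x y))"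

definition no_small_subgroups :: "('g, 'c) monoid_scheme \<Rightarrow> ('g \<Rightarrow> 'g \<Rightarrow> real) \<Rightarrow> real \<Rightarrow> bool" where
  "no_small_subgroups G d \<epsilon> = (\<forall>H. subgroup H G \<and> H \<subseteq> {g \<in> carrier G. d g \<one>\<^bsub>G\<^esub> < \<epsilon>}
        \<longrightarrow> H = {\<one>\<^bsub>G\<^esub>})"

text \<open>Uniform distance of two maps on a set (possibly infinite, hence ereal).\<close>
definition sup_dist :: "('g \<Rightarrow> 'g \<Rightarrow> real) \<Rightarrow> 'x set \<Rightarrow> ('x \<Rightarrow> 'g) \<Rightarrow> ('x \<Rightarrow> 'g) \<Rightarrow> ereal" where
  "sup_dist d X f1 f2 = (SUP x\<in>X. ereal (d (f1 x) (f2 x)))"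

definition sup_norm :: "('g, 'c) monoid_scheme \<Rightarrow> ('g \<Rightarrow> 'g \<Rightarrow> real) \<Rightarrow> 'x set \<Rightarrow> ('x \<Rightarrow> 'g) \<Rightarrow> ereal" where
  "sup_norm G d X f = sup_dist d X f (\<lambda>_. \<one>\<^bsub>G\<^esub>)"

definition alternating_map :: "('x, 'c) monoid_scheme \<Rightarrow> ('g, 'e) monoid_scheme \<Rightarrow> ('x \<Rightarrow> 'g) \<Rightarrow> bool" where
  "alternating_map X G f = (\<forall>x\<in>carrier X. f (inv\<^bsub>X\<^esub> x) = inv\<^bsub>G\<^esub> (f x))"

definition hom_dist :: "('x, 'c) monoid_scheme \<Rightarrow> ('g, 'e) monoid_scheme \<Rightarrow> ('g \<Rightarrow> 'g \<Rightarrow> real)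
    \<Rightarrow> ('x \<Rightarrow> 'g) \<Rightarrow> ereal" where
  "hom_dist \<Gamma> G d \<mu> = (INF \<rho>\<in>hom \<Gamma> G. sup_dist d (carrier \<Gamma>) \<mu> \<rho>)"

end

theory Submission
  imports Defs
begin

lemma hom_trivial_small:
  assumes "group X" "group G" "h \<in> hom X G" "no_small_subgroups G d \<epsilon>"
    and "\<forall>x\<in>carrier X. d (h x) \<one>\<^bsub>G\<^esub> < \<epsilon>" and "x \<in> carrier X"
  shows "h x = \<one>\<^bsub>G\<^esub>"
proof -
  interpret gh: group_hom X G h using assms by (simp add: group_hom_def group_hom_axioms_def)
  have "subgroup (h ` carrier X) G" by (rule gh.img_is_subgroup)
  moreover have "h ` carrier X \<subseteq> {g \<in> carrier G. d g \<one>\<^bsub>G\<^esub> < \<epsilon>}"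
    using assms(5) gh.hom_closed by auto
  ultimately have "h ` carrier X = {\<one>\<^bsub>G\<^esub>}" using assms(4) unfolding no_small_subgroups_def by blast
  thus ?thesis using assms(6) by auto
qed

lemma alt_one:
  assumes "group X" "group G" "f \<in> carrier X \<rightarrow> carrier G" "alternating_map X G f"
    "no_small_subgroups G d \<epsilon>" "bi_invariant_metric G d" "d (f \<one>\<^bsub>X\<^esub>) \<one>\<^bsub>G\<^esub> < \<epsilon>" "\<epsilon> > 0"
  shows "f \<one>\<^bsub>X\<^esub> = \<one>\<^bsub>G\<^esub>"
proof -
  interpret X: group X by fact
  interpret G: group G by fact
  define t where "t = f \<one>\<^bsub>X\<^esub>"
  have tc: "t \<in> carrier G" using assms(3) unfolding t_def by auto
  have it: "inv\<^bsub>G\<^esub> t = t" using assms(4) unfolding alternating_map_def t_def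
    by (metis X.inv_one X.one_closed)
  have tt: "t \<otimes>\<^bsub>G\<^esub> t = \<one>\<^bsub>G\<^esub>" using it tc by (metis G.r_inv)
  have sg: "subgroup {\<one>\<^bsub>G\<^esub>, t} G"
    apply (rule subgroup.intro)
    using tc tt it by auto
  have d0: "d \<one>\<^bsub>G\<^esub> \<one>\<^bsub>G\<^esub> = 0" using assms(6) unfolding bi_invariant_metric_def metric_on_def by auto
  have "{\<one>\<^bsub>G\<^esub>, t} \<subseteq> {g \<in> carrier G. d g \<one>\<^bsub>G\<^esub> < \<epsilon>}"
    using tc d0 assms(7,8) unfolding t_def by auto
  hence "{\<one>\<^bsub>G\<^esub>, t} = {\<one>\<^bsub>G\<^esub>}" using sg assms(5) unfolding no_small_subgroups_def by blast
  thus ?thesis unfolding t_def by auto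
qed

lemma iotaA_carrier: "a \<in> carrier A \<Longrightarrow> cons_red A B (Inl a) [] \<in> carrier (free_product A B)"
  by (simp add: free_product_def reduced_word_def nontriv_letter_def)
lemma iotaB_carrier: "b \<in> carrier B \<Longrightarrow> cons_red A B (Inr b) [] \<in> carrier (free_product A B)"
  by (simp add: free_product_def reduced_word_def nontriv_letter_def)

lemma iotaA_mult: assumes "group A" "a \<in> carrier A" "a' \<in> carrier A"
  shows "cons_red A B (Inl (a \<otimes>\<^bsub>A\<^esub> a')) [] = cons_red A B (Inl a) [] \<otimes>\<^bsub>free_product A B\<^esub> cons_red A B (Inl a') []"
proof -
  interpret group A by fact
  show ?thesis using assms by (auto simp add: free_product_def)
qed
lemma iotaB_mult: assumes "group B" "b \<in> carrier B" "b' \<in> carrier B"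
  shows "cons_red A B (Inr (b \<otimes>\<^bsub>B\<^esub> b')) [] = cons_red A B (Inr b) [] \<otimes>\<^bsub>free_product A B\<^esub> cons_red A B (Inr b') []"
proof -
  interpret group B by fact
  show ?thesis using assms by (auto simp add: free_product_def)
qed

lemma split_A: "muA \<one>\<^bsub>A\<^esub> = \<one>\<^bsub>G\<^esub> \<Longrightarrow> group G \<Longrightarrow> muA \<in> carrier A \<rightarrow> carrier G \<Longrightarrow> a \<in> carrier A
   \<Longrightarrow> split_map G muA muB (cons_red A B (Inl a) []) = muA a"
  by (auto simp add: split_map_def group.is_monoid monoid.r_one Pi_iff)
lemma split_B: "muB \<one>\<^bsub>B\<^esub> = \<one>\<^bsub>G\<^esub> \<Longrightarrow> group G \<Longrightarrow> muB \<in> carrier B \<rightarrow> carrier G \<Longrightarrow> b \<in> carrier B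
   \<Longrightarrow> split_map G muA muB (cons_red A B (Inr b) []) = muB b"
  by (auto simp add: split_map_def group.is_monoid monoid.r_one Pi_iff)

theorem theorem4p2:
  fixes A :: "'a monoid" and B :: "'b monoid" and G :: "'g monoid"
    and d :: "'g \<Rightarrow> 'g \<Rightarrow> real" and \<epsilon> :: real
    and muA :: "'a \<Rightarrow> 'g" and muB :: "'b \<Rightarrow> 'g"
  assumes "group A" and "group B"
    and "carrier A \<noteq> {\<one>\<^bsub>A\<^esub>}" and "carrier B \<noteq> {\<one>\<^bsub>B\<^esub>}"
    and "\<epsilon> > 0"
    and "group G" and "bi_invariant_metric G d" and "no_small_subgroups G d \<epsilon>"
    and "muA \<in> carrier A \<rightarrow> carrier G" and "muB \<in> carrier B \<rightarrow> carrier G"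
    and "alternating_map A G muA" and "alternating_map B G muB"
    and "sup_norm G d (carrier A) muA < \<infinity>" and "sup_norm G d (carrier B) muB < \<infinity>"
    and "max (sup_norm G d (carrier A) muA) (sup_norm G d (carrier B) muB) \<le> ereal (\<epsilon> / 2)"
  shows "hom_dist (free_product A B) G d (split_map G muA muB)
           \<ge> max (sup_norm G d (carrier A) muA) (sup_norm G d (carrier B) muB)"
proof -
  let ?\<Gamma> = "free_product A B"
  let ?\<mu> = "split_map G muA muB"
  let ?M = "max (sup_norm G d (carrier A) muA) (sup_norm G d (carrier B) muB)"
  interpret A: group A by fact
  interpret B: group B by fact
  interpret G: group G by fact
  have met: "metric_on (carrier G) d" using assms(7) unfolding bi_invariant_metric_def by auto
  have normA: "ereal (d (muA a) \<one>\<^bsub>G\<^esub>) \<le> ?M" if "a \<in> carrier A" for a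
  proof -
    have "ereal (d (muA a) \<one>\<^bsub>G\<^esub>) \<le> sup_norm G d (carrier A) muA"
      unfolding sup_norm_def sup_dist_def using that by (rule SUP_upper2) simp
    thus ?thesis using max.coboundedI1 max.coboundedI2 order.trans by metis
  qed
  have normB: "ereal (d (muB b) \<one>\<^bsub>G\<^esub>) \<le> ?M" if "b \<in> carrier B" for b
  proof -
    have "ereal (d (muB b) \<one>\<^bsub>G\<^esub>) \<le> sup_norm G d (carrier B) muB"
      unfolding sup_norm_def sup_dist_def using that by (rule SUP_upper2) simp
    thus ?thesis using max.coboundedI1 max.coboundedI2 order.trans by metis
  qed
  have half: "x \<le> \<epsilon>/2" if "ereal x \<le> ?M" for x
    using that assms(15) order.trans ereal_less_eq(3) by blast
  have mA1: "muA \<one>\<^bsub>A\<^esub> = \<one>\<^bsub>G\<^esub>"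
    apply (rule alt_one[OF assms(1,6,9,11,8,7) _ assms(5)])
    using half[OF normA[OF A.one_closed]] assms(5) by linarith
  have mB1: "muB \<one>\<^bsub>B\<^esub> = \<one>\<^bsub>G\<^esub>"
    apply (rule alt_one[OF assms(2,6,10,12,8,7) _ assms(5)])
    using half[OF normB[OF B.one_closed]] assms(5) by linarith
  show ?thesis unfolding hom_dist_def
  proof (rule INF_greatest)
    fix \<rho> assume \<rho>: "\<rho> \<in> hom ?\<Gamma> G"
    let ?S = "sup_dist d (carrier ?\<Gamma>) ?\<mu> \<rho>"
    show "?M \<le> ?S"
    proof (rule ccontr)
      assume "\<not> ?M \<le> ?S"
      hence lt: "?S < ?M" using not_le by blast
      have rc: "\<rho> x \<in> carrier G" if "x \<in> carrier ?\<Gamma>" for x using \<rho> that unfolding hom_def by auto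
      have pt: "d (?\<mu> x) (\<rho> x) < \<epsilon>/2" if "x \<in> carrier ?\<Gamma>" for x
      proof -
        have "ereal (d (?\<mu> x) (\<rho> x)) \<le> ?S" unfolding sup_dist_def using that by (rule SUP_upper2) simp
        hence "ereal (d (?\<mu> x) (\<rho> x)) < ereal (\<epsilon>/2)" using lt assms(15) by order
        thus ?thesis by simp
      qed
      have small: "d (\<rho> x) \<one>\<^bsub>G\<^esub> < \<epsilon>" if x: "x \<in> carrier ?\<Gamma>" "?\<mu> x \<in> carrier G" "d (?\<mu> x) \<one>\<^bsub>G\<^esub> \<le> \<epsilon>/2" for x
      proof -
        have "d (\<rho> x) \<one>\<^bsub>G\<^esub> \<le> d (\<rho> x) (?\<mu> x) + d (?\<mu> x) \<one>\<^bsub>G\<^esub>"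
          using met x rc[OF x(1)] unfolding metric_on_def by blast
        moreover have "d (\<rho> x) (?\<mu> x) = d (?\<mu> x) (\<rho> x)"
          using met x rc[OF x(1)] unfolding metric_on_def by blast
        ultimately show ?thesis using pt[OF x(1)] x by linarith
      qed
      have \<rho>m: "\<rho> (x \<otimes>\<^bsub>?\<Gamma>\<^esub> y) = \<rho> x \<otimes>\<^bsub>G\<^esub> \<rho> y" if "x \<in> carrier ?\<Gamma>" "y \<in> carrier ?\<Gamma>" for x y
        using \<rho> that unfolding hom_def by auto
      have hA: "(\<lambda>a. \<rho> (cons_red A B (Inl a) [])) \<in> hom A G"
        by (rule homI) (metis rc iotaA_carrier, metis \<rho>m iotaA_carrier iotaA_mult[OF assms(1)])
      have hB: "(\<lambda>b. \<rho> (cons_red A B (Inr b) [])) \<in> hom B G"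
        by (rule homI) (metis rc iotaB_carrier, metis \<rho>m iotaB_carrier iotaB_mult[OF assms(2)])
      have tA: "\<rho> (cons_red A B (Inl a) []) = \<one>\<^bsub>G\<^esub>" if "a \<in> carrier A" for a
      proof -
        have "\<forall>a\<in>carrier A. d (\<rho> (cons_red A B (Inl a) [])) \<one>\<^bsub>G\<^esub> < \<epsilon>"
        proof
          fix a assume a: "a \<in> carrier A"
          show "d (\<rho> (cons_red A B (Inl a) [])) \<one>\<^bsub>G\<^esub> < \<epsilon>"
            apply (rule small[OF iotaA_carrier[OF a]])
            unfolding split_A[OF mA1 assms(6,9) a] using half[OF normA[OF a]] assms(9) a by (auto simp: Pi_iff)
        qed
        thus ?thesis using hom_trivial_small[OF assms(1,6) hA assms(8)] that by blast
      qed
      have tB: "\<rho> (cons_red A B (Inr b) []) = \<one>\<^bsub>G\<^esub>" if "b \<in> carrier B" for b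
      proof -
        have "\<forall>a\<in>carrier B. d (\<rho> (cons_red A B (Inr a) [])) \<one>\<^bsub>G\<^esub> < \<epsilon>"
        proof
          fix a assume a: "a \<in> carrier B"
          show "d (\<rho> (cons_red A B (Inr a) [])) \<one>\<^bsub>G\<^esub> < \<epsilon>"
            apply (rule small[OF iotaB_carrier[OF a]])
            unfolding split_B[OF mB1 assms(6,10) a] using half[OF normB[OF a]] assms(10) a by (auto simp: Pi_iff)
        qed
        thus ?thesis using hom_trivial_small[OF assms(2,6) hB assms(8)] that by blast
      qed
      have "sup_norm G d (carrier A) muA \<le> ?S" unfolding sup_norm_def sup_dist_def
      proof (rule SUP_least)
        fix a assume a: "a \<in> carrier A"
        have sX: "ereal (d (?\<mu> (cons_red A B (Inl a) [])) (\<rho> (cons_red A B (Inl a) []))) \<le> ?S"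
          unfolding sup_dist_def using iotaA_carrier[OF a] by (rule SUP_upper2) simp
        show "ereal (d (muA a) \<one>\<^bsub>G\<^esub>) \<le> (SUP x\<in>carrier ?\<Gamma>. ereal (d (?\<mu> x) (\<rho> x)))"
          using sX[unfolded tA[OF a] split_A[OF mA1 assms(6,9) a] sup_dist_def] by simp
      qed
      moreover have "sup_norm G d (carrier B) muB \<le> ?S" unfolding sup_norm_def sup_dist_def
      proof (rule SUP_least)
        fix b assume b: "b \<in> carrier B"
        have sX: "ereal (d (?\<mu> (cons_red A B (Inr b) [])) (\<rho> (cons_red A B (Inr b) []))) \<le> ?S"
          unfolding sup_dist_def using iotaB_carrier[OF b] by (rule SUP_upper2) simp
        show "ereal (d (muB b) \<one>\<^bsub>G\<^esub>) \<le> (SUP x\<in>carrier ?\<Gamma>. ereal (d (?\<mu> x) (\<rho> x)))"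
          using sX[unfolded tB[OF b] split_B[OF mB1 assms(6,10) b] sup_dist_def] by simp
      qed
      ultimately show False using lt by (metis max.bounded_iff not_le)
    qed
  qed
qed

end
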